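(* Let $\mathcal{X}$ be a Banach space with an unconditional basis $\mathcal{E}=\{e_n\}_{n\ge1}$, ordered by $\mathcal{E}$, and let $T$ be a positive operator whose matrix $A=(a_{n,m})_{n,m\in\mathbb{N}}$ with respect to $\mathcal{E}$ is tridiagonal. Then $T$ has no non-trivial closed invariant ideals if and only if $a_{n+1,n}\neq0$ and $a_{n,n+1}\ne0$ for every $n\in\mathbb{N}$.
   Context: The matrix of $T$ is given by $Te_m=\sum_n a_{n,m}e_n$; $T$ positive means $a_{n,m}\ge0$ for all $n,m$. Tridiagonal means $a_{n,m}=0$ whenever $|n-m|>1$. An ideal is a linear subspace $M$ such that $|x|\le|y|$ coordinatewise and $y\in M$ imply $x\in M$, where $|x|=\sum_n|x_n|e_n$. Non-trivial means different from $\{0\}$ and $\mathcal{X}$. *)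

theory Defs
  imports "HOL-Analysis.Analysis"
begin

definition schauder_basis :: "(nat \<Rightarrow> 'a::banach) \<Rightarrow> bool" where
  "schauder_basis e \<longleftrightarrow> (\<forall>x. \<exists>!c. (\<lambda>n. c n *\<^sub>R e n) sums x)"

definition unconditional_basis :: "(nat \<Rightarrow> 'a::banach) \<Rightarrow> bool" where
  "unconditional_basis e \<longleftrightarrow> schauder_basis e \<and>
     (\<forall>c x. (\<lambda>n. c n *\<^sub>R e n) sums x \<longrightarrow> ((\<lambda>n. c n *\<^sub>R e n) has_sum x) UNIV)"

definition coord :: "(nat \<Rightarrow> 'a::banach) \<Rightarrow> 'a \<Rightarrow> nat \<Rightarrow> real" where
  "coord e x = (THE c. (\<lambda>n. c n *\<^sub>R e n) sums x)"

definition matrix_entry :: "(nat \<Rightarrow> 'a::banach) \<Rightarrow> ('a \<Rightarrow> 'a) \<Rightarrow> nat \<Rightarrow> nat \<Rightarrow> real" where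
  "matrix_entry e T n m = coord e (T (e m)) n"

definition positive_op :: "(nat \<Rightarrow> 'a::banach) \<Rightarrow> ('a \<Rightarrow> 'a) \<Rightarrow> bool" where
  "positive_op e T \<longleftrightarrow> (\<forall>n m. matrix_entry e T n m \<ge> 0)"

definition tridiagonal :: "(nat \<Rightarrow> 'a::banach) \<Rightarrow> ('a \<Rightarrow> 'a) \<Rightarrow> bool" where
  "tridiagonal e T \<longleftrightarrow> (\<forall>n m. \<bar>int n - int m\<bar> > 1 \<longrightarrow> matrix_entry e T n m = 0)"

definition basis_ideal :: "(nat \<Rightarrow> 'a::banach) \<Rightarrow> 'a set \<Rightarrow> bool" where
  "basis_ideal e M \<longleftrightarrow> subspace M \<and>
     (\<forall>x y. y \<in> M \<and> (\<forall>n. \<bar>coord e x n\<bar> \<le> \<bar>coord e y n\<bar>) \<longrightarrow> x \<in> M)"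

end

theory Submission
  imports Defs
begin

locale sbasis = fixes e :: "nat \<Rightarrow> 'a::banach" assumes sb: "schauder_basis e"
begin

lemma coord_sums: "(\<lambda>n. coord e x n *\<^sub>R e n) sums x"
  using sb unfolding schauder_basis_def coord_def by (metis (mono_tags) theI')

lemma coord_eq: "(\<lambda>n. c n *\<^sub>R e n) sums x \<Longrightarrow> coord e x = c"
  using sb unfolding schauder_basis_def coord_def by (metis (mono_tags) the1_equality)

lemma coord_add: "coord e (x + y) = (\<lambda>n. coord e x n + coord e y n)"
  by (rule coord_eq) (use sums_add[OF coord_sums[of x] coord_sums[of y]] in \<open>simp add: scaleR_add_left\<close>)

lemma coord_scaleR: "coord e (a *\<^sub>R x) = (\<lambda>n. a * coord e x n)"
  by (rule coord_eq) (use sums_scaleR_right[OF coord_sums[of x], of a] in \<open>simp\<close>)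

lemma coord_diff: "coord e (x - y) = (\<lambda>n. coord e x n - coord e y n)"
  by (rule coord_eq) (use sums_diff[OF coord_sums[of x] coord_sums[of y]] in \<open>simp add: scaleR_diff_left\<close>)

lemma coord_zero: "coord e 0 = (\<lambda>n. 0)"
  by (rule coord_eq) simp

lemma coord_fin: assumes "\<And>n. n \<ge> N \<Longrightarrow> c n = 0"
  shows "coord e (\<Sum>n<N. c n *\<^sub>R e n) = c"
  by (rule coord_eq, rule sums_finite) (use assms in auto)

lemma e_nz: "e m \<noteq> 0"
proof
  assume h: "e m = 0"
  have "(\<lambda>n. (if n = m then 1 else 0) *\<^sub>R e n) sums 0"
    using sums_zero by (rule sums_cong[THEN iffD1, rotated]) (simp add: h)
  from coord_eq[OF this] coord_zero show False by (metis zero_neq_one)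
qed

lemma coord_e: "coord e (e m) = (\<lambda>n. if n = m then 1 else 0)"
proof (rule coord_eq)
  show "(\<lambda>n. (if n = m then 1 else 0) *\<^sub>R e n) sums e m"
    using sums_single[of m e] by (rule sums_cong[THEN iffD1, rotated]) simp
qed

lemma coord_zero_imp: "(\<And>n. coord e x n = 0) \<Longrightarrow> x = 0"
  using coord_sums[of x] by (simp add: sums_zero_iff_shift) (metis sums_unique sums_zero)


definition P where "P N x = (\<Sum>n<N. coord e x n *\<^sub>R e n)"

lemma P_add: "P N (x + y) = P N x + P N y"
  by (simp add: P_def coord_add scaleR_add_left sum.distrib)
lemma P_diff: "P N (x - y) = P N x - P N y"
  by (simp add: P_def coord_diff scaleR_diff_left sum_subtractf)
lemma P_scaleR: "P N (a *\<^sub>R x) = a *\<^sub>R P N x"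
  by (simp add: P_def coord_scaleR scaleR_sum_right)
lemma P_zero: "P N 0 = 0"
  by (simp add: P_def coord_zero)
lemma P_lim: "(\<lambda>N. P N x) \<longlonglongrightarrow> x"
  using coord_sums[of x] by (simp add: P_def sums_def)
lemma P_Suc: "P (Suc n) x - P n x = coord e x n *\<^sub>R e n"
  by (simp add: P_def)
lemma P_bounded: "\<exists>K. \<forall>N. norm (P N x) \<le> K"
  using convergent_imp_Bseq[OF convergentI[OF P_lim[of x]]] by (metis BseqE)

definition F :: "real \<Rightarrow> 'a set" where "F s = {x. \<forall>N. norm (P N x) \<le> s}"

lemma baire_step: "\<exists>k::nat. \<exists>x0 r. r > 0 \<and> ball x0 r \<subseteq> closure (F (real k))"
proof (rule ccontr)
  assume H: "\<not> ?thesis"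
  have "interior (closure (F (real k))) = {}" for k
  proof (rule ccontr)
    assume "interior (closure (F (real k))) \<noteq> {}"
    then obtain x0 where "x0 \<in> interior (closure (F (real k)))" by blast
    then obtain r where "r > 0" "ball x0 r \<subseteq> closure (F (real k))"
      by (meson mem_interior)
    with H show False by blast
  qed
  then have "euclidean interior_of \<Union>(range (\<lambda>k::nat. closure (F (real k)))) = {}"
    by (intro Baire_category_alt) (auto simp: completely_metrizable_space_euclidean)
  moreover have "\<Union>(range (\<lambda>k::nat. closure (F (real k)))) = UNIV"
  proof -
    show ?thesis
    proof (safe)
      fix x :: 'a
      obtain K where K: "\<forall>N. norm (P N x) \<le> K" using P_bounded by blast
      obtain k :: nat where "K \<le> real k" using real_arch_simple by blast
      then have "x \<in> F (real k)" using K unfolding F_def by (auto intro: order_trans)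
      then show "x \<in> \<Union>(range (\<lambda>k::nat. closure (F (real k))))"
        using closure_subset by blast
    qed auto
  qed
  ultimately show False by simp
qed


lemma F_scale: "a \<in> F s \<Longrightarrow> t *\<^sub>R a \<in> F (\<bar>t\<bar> * s)"
  by (auto simp: F_def P_scaleR intro: mult_left_mono)

lemma F_half: assumes "a \<in> F s" "b \<in> F s" shows "(1/2) *\<^sub>R (a - b) \<in> F s"
proof -
  have "norm (P N ((1/2) *\<^sub>R (a - b))) \<le> s" for N
  proof -
    have "norm (P N ((1/2) *\<^sub>R (a - b))) = (1/2) * norm (P N a - P N b)"
      by (simp add: P_scaleR P_diff)
    also have "\<dots> \<le> (1/2) * (norm (P N a) + norm (P N b))"
      by (simp add: norm_triangle_ineq4)
    also have "\<dots> \<le> s"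
    proof -
      have "norm (P N a) \<le> s" "norm (P N b) \<le> s" using assms by (auto simp: F_def)
      then show ?thesis by (auto simp: field_simps)
    qed
    finally show ?thesis .
  qed
  then show ?thesis by (simp add: F_def)
qed

lemma ball0: fixes x0 :: 'a assumes "ball x0 r \<subseteq> closure (F s)" shows "ball 0 r \<subseteq> closure (F s)"
proof
  fix z :: 'a assume "z \<in> ball 0 r"
  then have zr: "norm z < r" by simp
  have A: "x0 + z \<in> closure (F s)" "x0 - z \<in> closure (F s)"
    using assms zr by (auto simp: dist_norm subset_iff)
  show "z \<in> closure (F s)"
    unfolding closure_approachable
  proof (intro allI impI)
    fix \<epsilon> :: real assume "\<epsilon> > 0"
    obtain a where a: "a \<in> F s" "dist a (x0 + z) < \<epsilon>"
      using A(1) \<open>\<epsilon> > 0\<close> unfolding closure_approachable by blast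
    obtain b where b: "b \<in> F s" "dist b (x0 - z) < \<epsilon>"
      using A(2) \<open>\<epsilon> > 0\<close> unfolding closure_approachable by blast
    have "dist ((1/2) *\<^sub>R (a - b)) z = (1/2) * norm ((a - (x0 + z)) - (b - (x0 - z)))"
    proof -
      have "(1/2) *\<^sub>R (a - b) - z = (1/2) *\<^sub>R ((a - (x0 + z)) - (b - (x0 - z)))"
        by (simp add: algebra_simps) (metis scaleR_half_double scaleR_add_right)
      then show ?thesis by (simp add: dist_norm)
    qed
    also have "\<dots> \<le> (1/2) * (norm (a - (x0 + z)) + norm (b - (x0 - z)))"
      by (rule mult_left_mono[OF norm_triangle_ineq4]) simp
    also have "\<dots> < \<epsilon>" using a b by (simp add: dist_norm)
    finally show "\<exists>y\<in>F s. dist y z < \<epsilon>" using F_half[OF a(1) b(1)] by blast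
  qed
qed

lemma approx: assumes "ball 0 r \<subseteq> closure (F s)" "norm z < r / 2^i" "r > 0"
  shows "\<exists>y \<in> F (s / 2^i). norm (z - y) < r / 2^(Suc i)"
proof -
  define w where "w = (2^i) *\<^sub>R z"
  have "norm w < r" using assms(2) by (simp add: w_def field_simps)
  then have "w \<in> closure (F s)" using assms(1) by auto
  then obtain y' where y': "y' \<in> F s" "dist y' w < r/2"
    using assms(3) unfolding closure_approachable by (meson half_gt_zero)
  define y where "y = (1/2^i) *\<^sub>R y'"
  have "y \<in> F (s / 2^i)" using F_scale[OF y'(1), of "1/2^i"] by (simp add: y_def)
  moreover have "norm (z - y) = (1/2^i) * norm (w - y')"
  proof -
    have "z - y = (1/2^i) *\<^sub>R (w - y')" by (simp add: y_def w_def algebra_simps)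
    then show ?thesis by simp
  qed
  moreover have "(1/2^i) * norm (w - y') < (1/2^i) * (r/2)"
    using y'(2) by (intro mult_strict_left_mono) (auto simp: dist_norm norm_minus_commute)
  moreover have "(1/2^i) * (r/2) = r / 2^(Suc i)" by simp
  ultimately show ?thesis by (metis order_less_le_trans order_refl)
qed

lemma P_sum: "P N (\<Sum>j<I. f j) = (\<Sum>j<I. P N (f j))" for f :: "nat \<Rightarrow> 'a"
  by (induction I) (simp_all add: P_zero P_add)


lemma small_bound:
  assumes B: "ball 0 r \<subseteq> closure (F s)" and r: "r > 0" and s: "s \<ge> 0" and x: "norm x < r"
  shows "x \<in> F (2* s)"
proof -
  have "\<forall>i z. \<exists>y. norm z < r/2^i \<longrightarrow> y \<in> F (s/2^i) \<and> norm (z - y) < r/2^(Suc i)"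
    using approx[OF B _ r] by metis
  then obtain g where g: "\<And>i z. norm z < r/2^i \<Longrightarrow> g i z \<in> F (s/2^i) \<and> norm (z - g i z) < r/2^(Suc i)"
    by metis
  define z where "z = rec_nat x (\<lambda>i zi. zi - g i zi)"
  have z0: "z 0 = x" and zS: "\<And>i. z (Suc i) = z i - g i (z i)" by (simp_all add: z_def)
  have zb: "norm (z i) < r/2^i" for i
  proof (induction i)
    case 0 then show ?case using x by (simp add: z0)
  next
    case (Suc i) then show ?case using g[of "z i" i] by (simp add: zS)
  qed
  define y where "y i = g i (z i)" for i
  have yF: "y i \<in> F (s/2^i)" for i using g zb by (simp add: y_def)
  have yP: "norm (P N (y i)) \<le> s * (1/2)^i" for N i using yF[of i] by (simp add: F_def power_divide)
  have ysum: "x - (\<Sum>j<i. y j) = z i" for i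
    by (induction i) (simp_all add: z0 zS y_def)
  have geo0: "summable (\<lambda>i. (1/2::real)^i)" by (rule summable_geometric) simp
  have geo: "summable (\<lambda>i. c * (1/2::real)^i)" for c by (rule summable_mult[OF geo0])
  have geosum: "(\<Sum>i. c * (1/2::real)^i) = 2*c" for c
    using suminf_mult[OF geo0, of c] suminf_geometric[of "1/2::real"] by simp
  have sumP: "summable (\<lambda>i. P N (y i))" for N
    by (rule summable_comparison_test'[OF geo[of s]]) (use yP in auto)
  define Q where "Q N = (\<Sum>i. P N (y i))" for N
  have QB: "norm (Q N) \<le> 2* s" for N
    unfolding Q_def geosum[of s, symmetric] by (rule norm_suminf_le[OF yP geo])
  have hc: "summable (\<lambda>i. coord e (y i) n)" for n
  proof -
    have bd: "norm (coord e (y i) n) \<le> (2* s / norm (e n)) * (1/2)^i" for i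
    proof -
      have "\<bar>coord e (y i) n\<bar> * norm (e n) = norm (P (Suc n) (y i) - P n (y i))" by (simp add: P_Suc)
      also have "\<dots> \<le> norm (P (Suc n) (y i)) + norm (P n (y i))" by (rule norm_triangle_ineq4)
      also have "\<dots> \<le> 2 * (s * (1/2)^i)" using yP[of "Suc n" i] yP[of n i] by linarith
      finally show ?thesis using e_nz[of n] by (simp add: field_simps)
    qed
    show ?thesis by (rule summable_comparison_test'[OF geo[of "2* s / norm (e n)"]]) (rule bd)
  qed
  define c where "c n = (\<Sum>i. coord e (y i) n)" for n
  have Qc: "Q N = (\<Sum>n<N. c n *\<^sub>R e n)" for N
  proof -
    have "Q N = (\<Sum>i. \<Sum>n<N. coord e (y i) n *\<^sub>R e n)" by (simp add: Q_def P_def)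
    also have "\<dots> = (\<Sum>n<N. \<Sum>i. coord e (y i) n *\<^sub>R e n)"
      by (rule suminf_sum) (intro summable_scaleR_left hc)
    also have "\<dots> = (\<Sum>n<N. c n *\<^sub>R e n)" by (simp add: c_def suminf_scaleR_left[OF hc])
    finally show ?thesis .
  qed
  have Qlim: "Q \<longlonglongrightarrow> x"
  proof (rule LIMSEQ_I)
    fix \<epsilon> :: real assume "\<epsilon> > 0"
    have lim: "(\<lambda>I. (1/2::real)^I) \<longlonglongrightarrow> 0" by (intro LIMSEQ_realpow_zero) auto
    have ev: "eventually (\<lambda>I. (1/2::real)^I < \<epsilon> / (3*(2* s+1)) \<and> (1/2::real)^I < \<epsilon>/(3*r)) sequentially"
      by (intro eventually_conj order_tendstoD(2)[OF lim]) (use \<open>\<epsilon> > 0\<close> r s in auto)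
    then obtain I0 where "\<forall>I\<ge>I0. (1/2::real)^I < \<epsilon> / (3*(2* s+1)) \<and> (1/2::real)^I < \<epsilon>/(3*r)"
      unfolding eventually_sequentially by blast
    then have I1: "(1/2::real)^I0 < \<epsilon>/(3*(2* s+1))" and I2: "(1/2::real)^I0 < \<epsilon>/(3*r)"
      by auto
    define I where "I = I0"
    note I1 = I1[folded I_def] and I2 = I2[folded I_def]
    define xI where "xI = (\<Sum>j<I. y j)"
    obtain N0 where N0: "\<And>N. N \<ge> N0 \<Longrightarrow> norm (P N xI - xI) < \<epsilon>/3"
      using LIMSEQ_D[OF P_lim[of xI], of "\<epsilon>/3"] \<open>\<epsilon>>0\<close> by auto
    show "\<exists>N0. \<forall>N\<ge>N0. norm (Q N - x) < \<epsilon>"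
    proof (intro exI allI impI)
      fix N assume "N \<ge> N0"
      have t1: "norm (Q N - P N xI) \<le> 2*(s*(1/2)^I)"
      proof -
        have "Q N - P N xI = (\<Sum>i. P N (y (i + I)))"
          using suminf_split_initial_segment[OF sumP[of N], of I] by (simp add: Q_def xI_def P_sum)
        also have "norm \<dots> \<le> (\<Sum>i. (s*(1/2)^I) * (1/2)^i)"
          by (rule norm_suminf_le[OF _ geo], use yP[of N "_ + I"] in \<open>simp add: power_add mult_ac\<close>)
        also have "\<dots> = 2*(s*(1/2)^I)" by (rule geosum)
        finally show ?thesis .
      qed
      have t3: "norm (xI - x) < r*(1/2)^I"
        using ysum[of I] zb[of I] by (simp add: xI_def norm_minus_commute power_divide)
      have "norm (Q N - x) \<le> norm (Q N - P N xI) + norm (P N xI - xI) + norm (xI - x)"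
        by (metis norm_diff_triangle_le order_refl)
      moreover have "(2* s+1)*(1/2)^I < (2* s+1)*(\<epsilon>/(3*(2* s+1)))"
        by (rule mult_strict_left_mono[OF I1]) (use s in linarith)
      moreover have "r*(1/2)^I < r*(\<epsilon>/(3*r))"
        by (rule mult_strict_left_mono[OF I2 r])
      moreover have "(2* s+1)*(\<epsilon>/(3*(2* s+1))) = \<epsilon>/3" using s by (simp add: field_simps)
      moreover have "r*(\<epsilon>/(3*r)) = \<epsilon>/3" using r by (simp add: field_simps)
      moreover have "2*(s*(1/2)^I) \<le> (2* s+1)*(1/2::real)^I" by (simp add: algebra_simps)
      ultimately show "norm (Q N - x) < \<epsilon>"
        using t1 t3 N0[OF \<open>N \<ge> N0\<close>] by linarith
    qed
  qed
  have Qf: "Q = (\<lambda>N. \<Sum>n<N. c n *\<^sub>R e n)" using Qc by auto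
  have "coord e x = c" by (rule coord_eq) (use Qlim in \<open>simp add: sums_def Qf\<close>)
  then have "P N x = Q N" for N by (simp add: P_def Qc)
  then show ?thesis using QB by (simp add: F_def)
qed


lemma P_uniform: "\<exists>C. \<forall>N x. norm (P N x) \<le> C * norm x"
proof -
  obtain k :: nat and x0 r where r: "r > 0" and B0: "ball x0 r \<subseteq> closure (F (real k))"
    using baire_step by blast
  have B: "ball 0 r \<subseteq> closure (F (real k))" by (rule ball0[OF B0])
  have "norm (P N x) \<le> (4 * real k / r) * norm x" for N x
  proof (cases "x = 0")
    case True then show ?thesis by (simp add: P_zero)
  next
    case False
    define t where "t = r / (2 * norm x)"
    have t: "t > 0" using r False by (simp add: t_def)
    have "norm (t *\<^sub>R x) < r" using r False by (simp add: t_def)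
    then have "t *\<^sub>R x \<in> F (2 * real k)" using small_bound[OF B r] by simp
    then have "norm (P N (t *\<^sub>R x)) \<le> 2 * real k" by (simp add: F_def)
    then have "t * norm (P N x) \<le> 2 * real k" using t by (simp add: P_scaleR)
    then have "norm (P N x) \<le> 2 * real k / t" using t by (simp add: field_simps)
    also have "2 * real k / t = (4 * real k / r) * norm x" using r False by (simp add: t_def field_simps)
    finally show ?thesis .
  qed
  then show ?thesis by blast
qed

lemma coord_bounded_linear: "bounded_linear (\<lambda>x. coord e x n)"
proof -
  obtain C where C: "\<And>N x. norm (P N x) \<le> C * norm x" using P_uniform by blast
  show ?thesis
  proof (rule bounded_linear_intro[where K = "2 * C / norm (e n)"])
    fix x y show "coord e (x + y) n = coord e x n + coord e y n" by (simp add: coord_add)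
  next
    fix a x show "coord e (a *\<^sub>R x) n = a *\<^sub>R coord e x n" by (simp add: coord_scaleR)
  next
    fix x
    have "\<bar>coord e x n\<bar> * norm (e n) = norm (P (Suc n) x - P n x)" by (simp add: P_Suc)
    also have "\<dots> \<le> norm (P (Suc n) x) + norm (P n x)" by (rule norm_triangle_ineq4)
    also have "\<dots> \<le> 2 * C * norm x" using C[of "Suc n" x] C[of n x] by linarith
    finally show "norm (coord e x n) \<le> norm x * (2 * C / norm (e n))"
      using e_nz[of n] by (simp add: field_simps)
  qed
qed

definition XS :: "nat set \<Rightarrow> 'a set" where "XS A = {x. \<forall>k. k \<notin> A \<longrightarrow> coord e x k = 0}"

lemma XS_closed: "closed (XS A)"
proof -
  have "XS A = (\<Inter>k\<in>-A. {x. coord e x k = 0})" by (auto simp: XS_def)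
  moreover have "closed {x. coord e x k = 0}" for k
    using bounded_linear.continuous_on[OF coord_bounded_linear[of k] continuous_on_id]
    by (intro closed_Collect_eq) auto
  ultimately show ?thesis by auto
qed

lemma XS_subspace: "subspace (XS A)"
  unfolding subspace_def XS_def by (simp add: coord_zero coord_add coord_scaleR)

lemma XS_ideal: "basis_ideal e (XS A)"
  unfolding basis_ideal_def
proof (intro conjI allI impI XS_subspace)
  fix x y assume h: "y \<in> XS A \<and> (\<forall>n. \<bar>coord e x n\<bar> \<le> \<bar>coord e y n\<bar>)"
  show "x \<in> XS A" unfolding XS_def
  proof (intro CollectI allI impI)
    fix k assume "k \<notin> A"
    then have "coord e y k = 0" using h by (simp add: XS_def)
    then show "coord e x k = 0" using h by (metis abs_le_zero_iff abs_zero)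
  qed
qed

lemma XS_e_in: "m \<in> A \<Longrightarrow> e m \<in> XS A"
  by (simp add: XS_def coord_e)

lemma XS_e_notin: "m \<notin> A \<Longrightarrow> e m \<notin> XS A"
  by (simp add: XS_def coord_e)

lemma XS_invariant:
  assumes T: "bounded_linear T" and TA: "\<And>m. m \<in> A \<Longrightarrow> T (e m) \<in> XS A"
  shows "T ` XS A \<subseteq> XS A"
proof
  fix w assume "w \<in> T ` XS A"
  then obtain x where x: "x \<in> XS A" and w: "w = T x" by blast
  have lin: "linear T" using T bounded_linear.linear by blast
  have "T (P N x) \<in> XS A" for N
  proof -
    have "T (P N x) = (\<Sum>n<N. coord e x n *\<^sub>R T (e n))"
      by (simp add: P_def linear_sum[OF lin] linear_scale[OF lin])
    also have "\<dots> \<in> XS A"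
    proof (rule subspace_sum[OF XS_subspace])
      fix n
      show "coord e x n *\<^sub>R T (e n) \<in> XS A"
      proof (cases "n \<in> A")
        case True then show ?thesis using TA subspace_scale[OF XS_subspace] by blast
      next
        case False then have "coord e x n = 0" using x by (simp add: XS_def)
        then show ?thesis using subspace_0[OF XS_subspace] by simp
      qed
    qed
    finally show ?thesis .
  qed
  moreover have "(\<lambda>N. T (P N x)) \<longlonglongrightarrow> T x"
    by (rule bounded_linear.tendsto[OF T P_lim])
  ultimately show "w \<in> XS A" unfolding w by (rule closed_sequentially[OF XS_closed])
qed

end

theorem corollary4p4:
  fixes e :: "nat \<Rightarrow> 'a::banach" and T :: "'a \<Rightarrow> 'a"
  assumes "unconditional_basis e"
    and "bounded_linear T"
    and "positive_op e T"
    and "tridiagonal e T"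
  shows "(\<not> (\<exists>M. closed M \<and> basis_ideal e M \<and> T ` M \<subseteq> M \<and> M \<noteq> {0} \<and> M \<noteq> UNIV))
     \<longleftrightarrow> (\<forall>n. matrix_entry e T (Suc n) n \<noteq> 0 \<and> matrix_entry e T n (Suc n) \<noteq> 0)"
proof -
  interpret sbasis e using assms(1) by unfold_locales (simp add: unconditional_basis_def)
  have ent: "coord e (T (e m)) n = matrix_entry e T n m" for m n by (simp add: matrix_entry_def)
  have tri: "\<bar>int n - int m\<bar> > 1 \<Longrightarrow> matrix_entry e T n m = 0" for n m
    using assms(4) by (simp add: tridiagonal_def)
  show ?thesis
  proof
    assume L: "\<not> (\<exists>M. closed M \<and> basis_ideal e M \<and> T ` M \<subseteq> M \<and> M \<noteq> {0} \<and> M \<noteq> UNIV)"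
    show "\<forall>n. matrix_entry e T (Suc n) n \<noteq> 0 \<and> matrix_entry e T n (Suc n) \<noteq> 0"
    proof (rule ccontr)
      assume "\<not> (\<forall>n. matrix_entry e T (Suc n) n \<noteq> 0 \<and> matrix_entry e T n (Suc n) \<noteq> 0)"
      then obtain n where n: "matrix_entry e T (Suc n) n = 0 \<or> matrix_entry e T n (Suc n) = 0" by blast
      have "\<exists>A m1 m2. m1 \<in> A \<and> m2 \<notin> A \<and> (\<forall>m\<in>A. T (e m) \<in> XS A)"
      proof (cases "matrix_entry e T (Suc n) n = 0")
        case True
        have "T (e m) \<in> XS {..n}" if "m \<in> {..n}" for m
          unfolding XS_def
        proof (intro CollectI allI impI)
          fix k assume "k \<notin> {..n}"
          show "coord e (T (e m)) k = 0"
          proof (cases "k = Suc m")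
            case True then have "m = n" using \<open>k \<notin> {..n}\<close> \<open>m \<in> {..n}\<close> by auto
            then show ?thesis using \<open>k = Suc m\<close> \<open>matrix_entry e T (Suc n) n = 0\<close> by (simp add: ent)
          next
            case False then have "\<bar>int k - int m\<bar> > 1" using \<open>k \<notin> {..n}\<close> \<open>m \<in> {..n}\<close> by auto
            then show ?thesis by (simp add: ent tri)
          qed
        qed
        then show ?thesis by (intro exI[of _ "{..n}"] exI[of _ n] exI[of _ "Suc n"]) auto
      next
        case False
        then have h: "matrix_entry e T n (Suc n) = 0" using n by blast
        have "T (e m) \<in> XS {Suc n..}" if "m \<in> {Suc n..}" for m
          unfolding XS_def
        proof (intro CollectI allI impI)
          fix k assume "k \<notin> {Suc n..}"
          show "coord e (T (e m)) k = 0"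
          proof (cases "m = Suc k")
            case True then have "k = n" using \<open>k \<notin> {Suc n..}\<close> \<open>m \<in> {Suc n..}\<close> by auto
            then show ?thesis using \<open>m = Suc k\<close> h by (simp add: ent)
          next
            case False then have "\<bar>int k - int m\<bar> > 1" using \<open>k \<notin> {Suc n..}\<close> \<open>m \<in> {Suc n..}\<close> by auto
            then show ?thesis by (simp add: ent tri)
          qed
        qed
        then show ?thesis by (intro exI[of _ "{Suc n..}"] exI[of _ "Suc n"] exI[of _ n]) auto
      qed
      then obtain A m1 m2 where A: "m1 \<in> A" "m2 \<notin> A" "\<forall>m\<in>A. T (e m) \<in> XS A" by blast
      have "closed (XS A) \<and> basis_ideal e (XS A) \<and> T ` XS A \<subseteq> XS A \<and> XS A \<noteq> {0} \<and> XS A \<noteq> UNIV"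
        using XS_closed XS_ideal XS_invariant[OF assms(2)] A XS_e_in[OF A(1)] XS_e_notin[OF A(2)] e_nz[of m1]
        by blast
      then show False using L by blast
    qed
  next
    assume R: "\<forall>n. matrix_entry e T (Suc n) n \<noteq> 0 \<and> matrix_entry e T n (Suc n) \<noteq> 0"
    show "\<not> (\<exists>M. closed M \<and> basis_ideal e M \<and> T ` M \<subseteq> M \<and> M \<noteq> {0} \<and> M \<noteq> UNIV)"
    proof
      assume "\<exists>M. closed M \<and> basis_ideal e M \<and> T ` M \<subseteq> M \<and> M \<noteq> {0} \<and> M \<noteq> UNIV"
      then obtain M where Mc: "closed M" and Mi: "basis_ideal e M" and MT: "T ` M \<subseteq> M"
        and M0: "M \<noteq> {0}" and MU: "M \<noteq> UNIV" by blast
      have sub: "subspace M" using Mi by (simp add: basis_ideal_def)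
      have dom: "\<And>x y. y \<in> M \<Longrightarrow> (\<forall>n. \<bar>coord e x n\<bar> \<le> \<bar>coord e y n\<bar>) \<Longrightarrow> x \<in> M"
        using Mi unfolding basis_ideal_def by blast
      have key: "e n \<in> M" if "y \<in> M" "coord e y n \<noteq> 0" for y n
      proof -
        have "coord e y n *\<^sub>R e n \<in> M"
          by (rule dom[OF that(1)]) (simp add: coord_scaleR coord_e)
        then have "(1 / coord e y n) *\<^sub>R (coord e y n *\<^sub>R e n) \<in> M"
          by (rule subspace_scale[OF sub])
        then show ?thesis using that(2) by simp
      qed
      have up: "e (Suc n) \<in> M" if "e n \<in> M" for n
        using key[of "T (e n)" "Suc n"] MT that R by (auto simp: ent)
      have down: "e n \<in> M" if "e (Suc n) \<in> M" for n
        using key[of "T (e (Suc n))" n] MT that R by (auto simp: ent)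
      obtain x where x: "x \<in> M" "x \<noteq> 0" using M0 subspace_0[OF sub] by blast
      obtain n0 where n0: "coord e x n0 \<noteq> 0" using x(2) coord_zero_imp by blast
      have en0: "e n0 \<in> M" by (rule key[OF x(1) n0])
      have U: "e (n0 + j) \<in> M" for j
        by (induction j) (simp_all add: en0 up)
      have D: "j \<le> n0 \<Longrightarrow> e (n0 - j) \<in> M" for j
      proof (induction j)
        case 0 then show ?case by (simp add: en0)
      next
        case (Suc j)
        then have "e (n0 - j) \<in> M" by simp
        moreover have "n0 - j = Suc (n0 - Suc j)" using Suc.prems by simp
        ultimately show ?case using down by metis
      qed
      have all: "e k \<in> M" for k
      proof (cases "n0 \<le> k")
        case True then show ?thesis using U[of "k - n0"] by simp
      next
        case False then show ?thesis using D[of "n0 - k"] by simp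
      qed
      have "z \<in> M" for z
      proof -
        have "P N z \<in> M" for N
          unfolding P_def by (intro subspace_sum[OF sub] subspace_scale[OF sub] all)
        then show ?thesis by (rule closed_sequentially[OF Mc _ P_lim[of z]])
      qed
      then show False using MU by blast
    qed
  qed
qed

end
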